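(* Consider a CoMP BC under the finite-field model over $\mathbb F_q$ with connectivity matrix $\mathbf M\in\{0,*\}^{K\times B}$. Then for every prime power $q$, $C_\Sigma^{\mathrm{NS}}(q)\ge \operatorname{tri}(\mathbf M)\log_2 q$, and $d_\Sigma^{\mathrm{NS}}\ge\operatorname{tri}(\mathbf M)$.
   Context: CoMP BC, finite-field model: $B$ transmit antennas, $K$ receivers, connectivity $\mathbf M\in\{0,*\}^{K\times B}$. At use $\tau$ the transmitter sends $X^{(\tau)}\in\mathbb F_q^B$ and Rx-$k$ observes $(Y_k^{(\tau)},(G_{kj}^{(\tau)})_j)$, $Y_k^{(\tau)}=\sum_jG_{kj}^{(\tau)}X_j^{(\tau)}$; coefficients mutually independent over $k,j,\tau$ and of the messages, uniform on $\mathbb F_q^\times$ if $M_{kj}=*$, else $0$. Messages $W_k$ independent, uniform on finite $\mathcal M_k$. A $\kappa$-partite NS box is a conditional pmf of outputs given inputs (finite output alphabets) whose output marginals for any subset of parties depend only on those parties' inputs. An NS-assisted scheme is a $(K+1)$-partite NS box where the transmitter inputs $(W_1,\dots,W_K)$ and obtains the channel input sequence, and Rx-$k$ inputs its channel output sequence and obtains $\hat W_k$; joint law = uniform message pmf $\times$ box $\times$ channel. Rates are achievable if some sequence of schemes has vanishing $\max_k\Pr(\hat W_k\ne W_k)$ and $\lim\frac1n\log_2|\mathcal M_k|\ge R_k$; $C_\Sigma^{\mathrm{NS}}(q)$ is the maximal sum rate over the closure. A DoF tuple is achievable if for each prime power $q$ some NS-achievable rate tuple has $\lim_q R_k(q)/\log_2q\ge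 d_k$; $d_\Sigma^{\mathrm{NS}}$ is the maximal sum over the closure. $\mathbf M$ contains a $D$-triangular matrix if after permuting rows and columns it has a $D\times D$ submatrix that is lower triangular with all diagonal entries $*$; $\operatorname{tri}(\mathbf M)$ is the largest such $D$. *)

theory Defs
  imports "HOL-Probability.Probability_Mass_Function" "HOL-Algebra.Ring"
          "HOL-Number_Theory.Prime_Powers" "HOL-Library.FuncSet"
begin

(* Connectivity matrix: M k j = True means M_kj = *, False means M_kj = 0;
   receivers k < K, antennas j < B.
   Finite field F_q: a HOL-Algebra field structure with finite carrier of
   natural numbers (every finite field is isomorphic to one of these). *)

definition has_tri :: "(nat \<Rightarrow> nat \<Rightarrow> bool) \<Rightarrow> nat \<Rightarrow> nat \<Rightarrow> nat \<Rightarrow> bool" where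
  "has_tri M K B D \<longleftrightarrow> (\<exists>r c. inj_on r {..<D} \<and> r ` {..<D} \<subseteq> {..<K} \<and>
      inj_on c {..<D} \<and> c ` {..<D} \<subseteq> {..<B} \<and>
      (\<forall>i<D. M (r i) (c i)) \<and> (\<forall>i<D. \<forall>j<D. i < j \<longrightarrow> \<not> M (r i) (c j)))"

definition tri :: "(nat \<Rightarrow> nat \<Rightarrow> bool) \<Rightarrow> nat \<Rightarrow> nat \<Rightarrow> nat" where
  "tri M K B = Max {D. has_tri M K B D}"

(* A kappa-partite NS box: party i < kappa has input alphabet I i; the box maps
   each input tuple to a pmf on output tuples (only coordinates < kappa matter). *)
definition ns_box :: "nat \<Rightarrow> (nat \<Rightarrow> 'i set) \<Rightarrow> ((nat \<Rightarrow> 'i) \<Rightarrow> (nat \<Rightarrow> 'o) pmf) \<Rightarrow> bool" where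
  "ns_box \<kappa> I P \<longleftrightarrow>
     (\<exists>Out. (\<forall>i<\<kappa>. finite (Out i)) \<and>
          (\<forall>a\<in>PiE {..<\<kappa>} I. \<forall>ou\<in>set_pmf (P a). \<forall>i<\<kappa>. ou i \<in> Out i)) \<and>
     (\<forall>S\<subseteq>{..<\<kappa>}. \<forall>a\<in>PiE {..<\<kappa>} I. \<forall>a'\<in>PiE {..<\<kappa>} I.
         (\<forall>i\<in>S. a i = a' i) \<longrightarrow>
         map_pmf (\<lambda>ou. restrict ou S) (P a) = map_pmf (\<lambda>ou. restrict ou S) (P a'))"

(* Party 0 = transmitter, party Suc k = receiver k. *)
datatype party_in = TxIn "nat \<Rightarrow> nat" | RxIn "nat \<Rightarrow> nat" "nat \<Rightarrow> nat \<Rightarrow> nat"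
datatype party_out = TxOut "nat \<Rightarrow> nat \<Rightarrow> nat" | RxOut nat

definition msg_set :: "nat \<Rightarrow> (nat \<Rightarrow> nat) \<Rightarrow> (nat \<Rightarrow> nat) set" where
  "msg_set K m = PiE {..<K} (\<lambda>k. {..<m k})"

(* channel input sequences X : tau \<mapsto> j \<mapsto> X_j^(tau) *)
definition chin_set :: "nat ring \<Rightarrow> nat \<Rightarrow> nat \<Rightarrow> (nat \<Rightarrow> nat \<Rightarrow> nat) set" where
  "chin_set F B n = PiE {..<n} (\<lambda>_. PiE {..<B} (\<lambda>_. carrier F))"

(* channel coefficient realisations G : tau \<mapsto> k \<mapsto> j \<mapsto> G_kj^(tau) *)
definition coef_set :: "nat ring \<Rightarrow> (nat \<Rightarrow> nat \<Rightarrow> bool) \<Rightarrow> nat \<Rightarrow> nat \<Rightarrow> nat \<Rightarrow> (nat \<Rightarrow> nat \<Rightarrow> nat \<Rightarrow> nat) set" where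
  "coef_set F M K B n = PiE {..<n} (\<lambda>_. PiE {..<K} (\<lambda>k. PiE {..<B} (\<lambda>j.
      if M k j then carrier F - {\<zero>\<^bsub>F\<^esub>} else {\<zero>\<^bsub>F\<^esub>})))"

definition party_inputs :: "nat ring \<Rightarrow> nat \<Rightarrow> nat \<Rightarrow> nat \<Rightarrow> (nat \<Rightarrow> nat) \<Rightarrow> nat \<Rightarrow> party_in set" where
  "party_inputs F K B n m i =
     (if i = 0 then TxIn ` msg_set K m
      else (\<lambda>(y, g). RxIn y g) ` (PiE {..<n} (\<lambda>_. carrier F) \<times> chin_set F B n))"

definition rx_obs_Y :: "nat ring \<Rightarrow> nat \<Rightarrow> nat \<Rightarrow> (nat \<Rightarrow> nat \<Rightarrow> nat) \<Rightarrow> (nat \<Rightarrow> nat \<Rightarrow> nat \<Rightarrow> nat) \<Rightarrow> nat \<Rightarrow> nat \<Rightarrow> nat" where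
  "rx_obs_Y F B n X G k = restrict (\<lambda>\<tau>. finsum F (\<lambda>j. G \<tau> k j \<otimes>\<^bsub>F\<^esub> X \<tau> j) {..<B}) {..<n}"

definition rx_obs_G :: "nat \<Rightarrow> nat \<Rightarrow> (nat \<Rightarrow> nat \<Rightarrow> nat \<Rightarrow> nat) \<Rightarrow> nat \<Rightarrow> nat \<Rightarrow> nat \<Rightarrow> nat" where
  "rx_obs_G B n G k = restrict (\<lambda>\<tau>. restrict (\<lambda>j. G \<tau> k j) {..<B}) {..<n}"

definition box_input :: "nat ring \<Rightarrow> nat \<Rightarrow> nat \<Rightarrow> nat \<Rightarrow> (nat \<Rightarrow> nat) \<Rightarrow> (nat \<Rightarrow> nat \<Rightarrow> nat)
      \<Rightarrow> (nat \<Rightarrow> nat \<Rightarrow> nat \<Rightarrow> nat) \<Rightarrow> nat \<Rightarrow> party_in" where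
  "box_input F K B n w X G = restrict (\<lambda>i. if i = 0 then TxIn w
      else RxIn (rx_obs_Y F B n X G (i - 1)) (rx_obs_G B n G (i - 1))) {..<Suc K}"

definition ns_scheme :: "nat ring \<Rightarrow> (nat \<Rightarrow> nat \<Rightarrow> bool) \<Rightarrow> nat \<Rightarrow> nat \<Rightarrow> nat \<Rightarrow> (nat \<Rightarrow> nat)
      \<Rightarrow> ((nat \<Rightarrow> party_in) \<Rightarrow> (nat \<Rightarrow> party_out) pmf) \<Rightarrow> bool" where
  "ns_scheme F M K B n m P \<longleftrightarrow> n > 0 \<and> (\<forall>k<K. m k > 0) \<and>
     ns_box (Suc K) (party_inputs F K B n m) P \<and>
     (\<forall>a\<in>PiE {..<Suc K} (party_inputs F K B n m). \<forall>ou\<in>set_pmf (P a).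
        ou 0 \<in> TxOut ` chin_set F B n \<and> (\<forall>k<K. ou (Suc k) \<in> range RxOut))"

(* Pr(hat W_k \<noteq> W_k) under the joint law
   uniform messages \<times> box \<times> channel (coefficients i.i.d. uniform on F^\<times> or 0) *)
definition err_prob :: "nat ring \<Rightarrow> (nat \<Rightarrow> nat \<Rightarrow> bool) \<Rightarrow> nat \<Rightarrow> nat \<Rightarrow> nat \<Rightarrow> (nat \<Rightarrow> nat)
      \<Rightarrow> ((nat \<Rightarrow> party_in) \<Rightarrow> (nat \<Rightarrow> party_out) pmf) \<Rightarrow> nat \<Rightarrow> real" where
  "err_prob F M K B n m P k =
     (\<Sum>w\<in>msg_set K m. \<Sum>X\<in>chin_set F B n. \<Sum>G\<in>coef_set F M K B n.
        (1 / (real (card (msg_set K m)) * real (card (coef_set F M K B n)))) *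
        measure_pmf.prob (P (box_input F K B n w X G))
          {ou. ou 0 = TxOut X \<and> ou (Suc k) \<noteq> RxOut (w k)})"

definition ns_achievable :: "nat ring \<Rightarrow> (nat \<Rightarrow> nat \<Rightarrow> bool) \<Rightarrow> nat \<Rightarrow> nat \<Rightarrow> (nat \<Rightarrow> real) \<Rightarrow> bool" where
  "ns_achievable F M K B R \<longleftrightarrow>
     (\<exists>n m P. (\<forall>s. ns_scheme F M K B (n s) (m s) (P s)) \<and>
        (\<forall>k<K. (\<lambda>s. err_prob F M K B (n s) (m s) (P s) k) \<longlonglongrightarrow> 0) \<and>
        (\<forall>k<K. \<exists>L. (\<lambda>s. log 2 (real (m s k)) / real (n s)) \<longlonglongrightarrow> L \<and> L \<ge> R k))"

definition C_sum_NS :: "nat ring \<Rightarrow> (nat \<Rightarrow> nat \<Rightarrow> bool) \<Rightarrow> nat \<Rightarrow> nat \<Rightarrow> ereal" where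
  "C_sum_NS F M K B = (SUP R \<in> closure {R. ns_achievable F M K B R}. ereal (\<Sum>k<K. R k))"

(* DoF: Fam q is the field F_q for each prime power q *)
definition dof_achievable :: "(nat \<Rightarrow> nat ring) \<Rightarrow> (nat \<Rightarrow> nat \<Rightarrow> bool) \<Rightarrow> nat \<Rightarrow> nat \<Rightarrow> (nat \<Rightarrow> real) \<Rightarrow> bool" where
  "dof_achievable Fam M K B d \<longleftrightarrow>
     (\<exists>R. (\<forall>q. primepow q \<longrightarrow> ns_achievable (Fam q) M K B (R q)) \<and>
        (\<forall>k<K. \<exists>L. ((\<lambda>q. R q k / log 2 (real q)) \<longlongrightarrow> L) (inf at_top (principal {q. primepow q}))
                   \<and> L \<ge> d k))"

definition d_sum_NS :: "(nat \<Rightarrow> nat ring) \<Rightarrow> (nat \<Rightarrow> nat \<Rightarrow> bool) \<Rightarrow> nat \<Rightarrow> nat \<Rightarrow> ereal" where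
  "d_sum_NS Fam M K B = (SUP d \<in> closure {d. dof_achievable Fam M K B d}. ereal (\<Sum>k<K. d k))"

end

theory Submission
  imports Defs
begin

lemma tri_bij:
  fixes \<phi> :: "nat \<Rightarrow> (nat \<Rightarrow> 'a) \<Rightarrow> 'a \<Rightarrow> 'a"
  assumes cl: "\<And>l z t. l < D \<Longrightarrow> t \<in> C \<Longrightarrow> \<phi> l z t \<in> C"
    and inj: "\<And>l z. l < D \<Longrightarrow> inj_on (\<phi> l z) C"
    and fin: "finite C" and ne: "C \<noteq> {}"
  shows "map_pmf (\<lambda>x. restrict (\<lambda>l. \<phi> l (restrict x {..<l}) (x l)) {..<D})
           (pmf_of_set (PiE {..<D} (\<lambda>_. C))) = pmf_of_set (PiE {..<D} (\<lambda>_. C))"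
proof -
  define A where "A = PiE {..<D} (\<lambda>_. C)"
  define f where "f = (\<lambda>x. restrict (\<lambda>l. \<phi> l (restrict x {..<l}) (x l)) {..<D})"
  have finA: "finite A" unfolding A_def using fin by (simp add: finite_PiE)
  have neA: "A \<noteq> {}" unfolding A_def using ne by (simp add: PiE_eq_empty_iff)
  have sub: "f ` A \<subseteq> A" unfolding A_def f_def using cl by (auto simp: PiE_iff)
  have injf: "inj_on f A"
  proof (rule inj_onI)
    fix x y assume x: "x \<in> A" and y: "y \<in> A" and e: "f x = f y"
    have "\<forall>i<D. x i = y i"
    proof (intro allI impI)
      fix i assume "i < D"
      then show "x i = y i"
      proof (induction i rule: less_induct)
        case (less i)
        have rr: "restrict x {..<i} = restrict y {..<i}"
          using less by (auto intro!: restrict_ext)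
        have "f x i = f y i" using e by simp
        then have "\<phi> i (restrict x {..<i}) (x i) = \<phi> i (restrict x {..<i}) (y i)"
          using less.prems rr unfolding f_def by simp
        moreover have "x i \<in> C" "y i \<in> C" using x y less.prems unfolding A_def by auto
        ultimately show ?case using inj[OF less.prems] by (auto dest: inj_onD)
      qed
    qed
    then show "x = y" using x y unfolding A_def by (metis PiE_ext lessThan_iff)
  qed
  have "f ` A = A" using endo_inj_surj[OF finA sub injf] .
  then show ?thesis using map_pmf_of_set_inj[OF injf neA finA]
    unfolding A_def f_def by simp
qed


definition txw :: "party_in \<Rightarrow> nat \<Rightarrow> nat" where
  "txw a0 = (case a0 of TxIn w \<Rightarrow> w | RxIn y g \<Rightarrow> (\<lambda>_. 0))"
definition rxy :: "party_in \<Rightarrow> nat \<Rightarrow> nat" where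
  "rxy ai = (case ai of TxIn w \<Rightarrow> (\<lambda>_. 0) | RxIn y g \<Rightarrow> y)"
definition rxg :: "party_in \<Rightarrow> nat \<Rightarrow> nat \<Rightarrow> nat" where
  "rxg ai = (case ai of TxIn w \<Rightarrow> (\<lambda>_ _. 0) | RxIn y g \<Rightarrow> g)"

locale tri_ctx = field R for R :: "nat ring" (structure) +
  fixes M :: "nat \<Rightarrow> nat \<Rightarrow> bool" and K B D :: nat and r c e :: "nat \<Rightarrow> nat"
  assumes fin: "finite (carrier R)"
    and r_inj: "inj_on r {..<D}" and r_rng: "r ` {..<D} \<subseteq> {..<K}"
    and c_inj: "inj_on c {..<D}" and c_rng: "c ` {..<D} \<subseteq> {..<B}"
    and diag: "\<forall>i<D. M (r i) (c i)" and upper: "\<forall>i<D. \<forall>j<D. i < j \<longrightarrow> \<not> M (r i) (c j)"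
    and e_bij: "bij_betw e {..<card (carrier R)} (carrier R)"
begin

definition q where "q = card (carrier R)"

definition Emb :: "nat \<Rightarrow> (nat \<Rightarrow> nat) \<Rightarrow> nat \<Rightarrow> nat" where
  "Emb l z j = (if j \<in> c ` {..<l} then z (inv_into {..<l} c j) else \<zero>)"

definition Hh :: "party_in \<Rightarrow> party_in \<Rightarrow> nat \<Rightarrow> (nat \<Rightarrow> nat) \<Rightarrow> nat" where
  "Hh a0 ai l z = (let v = e (txw a0 (r l)) \<ominus> inv (rxg ai 0 (c l)) \<otimes>
       (rxy ai 0 \<ominus> finsum R (\<lambda>j. rxg ai 0 j \<otimes> Emb l z j) ({..<B} - {c l}))
     in if v \<in> carrier R then v else \<zero>)"

definition wh :: "party_in \<Rightarrow> party_in \<Rightarrow> nat \<Rightarrow> (nat \<Rightarrow> nat) \<Rightarrow> nat" where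
  "wh a0 ai l x = x l \<oplus> Hh a0 ai l (restrict x {..<l})"

definition Xof :: "(nat \<Rightarrow> nat) \<Rightarrow> nat \<Rightarrow> nat \<Rightarrow> nat" where
  "Xof x = restrict (\<lambda>\<tau>. restrict (\<lambda>j. if j \<in> c ` {..<D} then x (inv_into {..<D} c j) else \<zero>) {..<B}) {..<1::nat}"

definition outp :: "(nat \<Rightarrow> party_in) \<Rightarrow> (nat \<Rightarrow> nat) \<Rightarrow> nat \<Rightarrow> party_out" where
  "outp a x = (\<lambda>i. if i = 0 then TxOut (Xof x)
     else if i - 1 \<in> r ` {..<D} then RxOut (inv_into {..<q} e (wh (a 0) (a i) (inv_into {..<D} r (i - 1)) x))
     else RxOut 0)"

definition U where "U = pmf_of_set (PiE {..<D} (\<lambda>_. carrier R))"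

definition box where "box a = map_pmf (outp a) U"

definition mm where "mm k = (if k \<in> r ` {..<D} then q else 1)"

lemma carrier_ne: "carrier R \<noteq> {}" using zero_closed by blast

lemma set_U: "set_pmf U = PiE {..<D} (\<lambda>_. carrier R)"
  unfolding U_def using fin carrier_ne by (simp add: finite_PiE PiE_eq_empty_iff)

lemma Hh_closed: "Hh a0 ai l z \<in> carrier R"
  unfolding Hh_def Let_def by auto

lemma wh_closed: "x \<in> PiE {..<D} (\<lambda>_. carrier R) \<Longrightarrow> l < D \<Longrightarrow> wh a0 ai l x \<in> carrier R"
  unfolding wh_def using Hh_closed by (auto simp: PiE_iff)

lemma Xof_closed: "x \<in> PiE {..<D} (\<lambda>_. carrier R) \<Longrightarrow> Xof x \<in> chin_set R B 1"
  unfolding Xof_def chin_set_def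
  by (auto simp: PiE_iff intro!: inv_into_into)

lemma box_bij: "map_pmf (\<lambda>x. restrict (\<lambda>l. wh (a 0) (a (Suc (r l))) l x) {..<D}) U = U"
  unfolding U_def wh_def
proof (rule tri_bij[where \<phi>="\<lambda>l z t. t \<oplus> Hh (a 0) (a (Suc (r l))) l z"])
  fix l z t assume "t \<in> carrier R" then show "t \<oplus> Hh (a 0) (a (Suc (r l))) l z \<in> carrier R"
    using Hh_closed by simp
next
  fix l z show "inj_on (\<lambda>t. t \<oplus> Hh (a 0) (a (Suc (r l))) l z) (carrier R)"
    using Hh_closed by (auto intro!: inj_onI)
qed (use fin carrier_ne in auto)

lemma box_ns: fixes I :: "nat \<Rightarrow> party_in set" shows "ns_box (Suc K) I box"
  unfolding ns_box_def
proof (intro conjI)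
  show "\<exists>Out. (\<forall>i<Suc K. finite (Out i)) \<and>
        (\<forall>a\<in>PiE {..<Suc K} I. \<forall>ou\<in>set_pmf (box a). \<forall>i<Suc K. ou i \<in> Out i)"
  proof (intro exI[of _ "\<lambda>i. if i = 0 then TxOut ` chin_set R B 1
            else insert (RxOut 0) (RxOut ` inv_into {..<q} e ` carrier R)"] conjI ballI allI impI)
    fix i show "finite (if i = 0 then TxOut ` chin_set R B 1
            else insert (RxOut 0) (RxOut ` inv_into {..<q} e ` carrier R))"
      using fin by (auto simp: chin_set_def finite_PiE)
  next
    fix a ou i assume "ou \<in> set_pmf (box a)"
    then obtain x where x: "x \<in> PiE {..<D} (\<lambda>_. carrier R)" and ou: "ou = outp a x"
      unfolding box_def using set_U by auto
    show "ou i \<in> (if i = 0 then TxOut ` chin_set R B 1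
            else insert (RxOut 0) (RxOut ` inv_into {..<q} e ` carrier R))"
      using Xof_closed[OF x] wh_closed[OF x] unfolding ou outp_def
      using r_inj by (auto intro!: imageI inv_into_into simp: inv_into_f_f)
  qed
next
  show "\<forall>S\<subseteq>{..<Suc K}. \<forall>a\<in>PiE {..<Suc K} I. \<forall>a'\<in>PiE {..<Suc K} I.
         (\<forall>i\<in>S. a i = a' i) \<longrightarrow>
         map_pmf (\<lambda>ou. restrict ou S) (box a) = map_pmf (\<lambda>ou. restrict ou S) (box a')"
  proof (intro allI impI ballI)
    fix S :: "nat set" and a a' :: "nat \<Rightarrow> party_in" assume S: "S \<subseteq> {..<Suc K}" and ag: "\<forall>i\<in>S. a i = a' i"
    show "map_pmf (\<lambda>ou. restrict ou S) (box a) = map_pmf (\<lambda>ou. restrict ou S) (box a')"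
    proof (cases "0 \<in> S")
      case True
      have "\<And>x. restrict (outp a x) S = restrict (outp a' x) S"
        using ag True unfolding outp_def by (auto intro!: restrict_ext)
      then show ?thesis unfolding box_def map_pmf_comp by simp
    next
      case False
      define \<Theta> where "\<Theta> = (\<lambda>v. restrict (\<lambda>i. if i - 1 \<in> r ` {..<D}
          then RxOut (inv_into {..<q} e (v (inv_into {..<D} r (i - 1)))) else RxOut 0) S)"
      have eq: "restrict (outp b x) S = \<Theta> (restrict (\<lambda>l. wh (b 0) (b (Suc (r l))) l x) {..<D})"
        for b x
        unfolding \<Theta>_def
      proof (rule restrict_ext)
        fix i assume i: "i \<in> S"
        then have i0: "i \<noteq> 0" using False by (cases "i = 0") auto
        show "outp b x i = (if i - 1 \<in> r ` {..<D}
          then RxOut (inv_into {..<q} e ((restrict (\<lambda>l. wh (b 0) (b (Suc (r l))) l x) {..<D}) (inv_into {..<D} r (i - 1)))) else RxOut 0)"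
        proof (cases "i - 1 \<in> r ` {..<D}")
          case True
          have l: "inv_into {..<D} r (i - 1) < D" using True r_inj by (auto simp: inv_into_f_f)
          have "r (inv_into {..<D} r (i - 1)) = i - 1" using True by (simp add: f_inv_into_f)
          then have "Suc (r (inv_into {..<D} r (i - 1))) = i" using i0 by simp
          then show ?thesis using True i i0 l unfolding outp_def \<Theta>_def by simp
        next
          case False
          then show ?thesis using i i0 unfolding outp_def \<Theta>_def by simp
        qed
      qed
      have "map_pmf (\<lambda>ou. restrict ou S) (box b) = map_pmf \<Theta> U" for b
      proof -
        have "map_pmf (\<lambda>ou. restrict ou S) (box b) =
              map_pmf \<Theta> (map_pmf (\<lambda>x. restrict (\<lambda>l. wh (b 0) (b (Suc (r l))) l x) {..<D}) U)"
          unfolding box_def map_pmf_comp eq ..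
        then show ?thesis using box_bij by simp
      qed
      then show ?thesis by simp
    qed
  qed
qed

lemma key:
  assumes w: "w \<in> msg_set K mm" and G: "G \<in> coef_set R M K B 1"
    and x: "x \<in> PiE {..<D} (\<lambda>_. carrier R)" and l: "l < D"
  shows "wh (box_input R K B 1 w (Xof x) G 0) (box_input R K B 1 w (Xof x) G (Suc (r l))) l x
         = e (w (r l))"
proof -
  define a where "a = box_input R K B 1 w (Xof x) G"
  have rl: "r l < K" using r_rng l by auto
  have cl: "c l < B" using c_rng l by auto
  have a0: "a 0 = TxIn w" by (simp add: a_def box_input_def)
  have a1: "a (Suc (r l)) = RxIn (rx_obs_Y R B 1 (Xof x) G (r l)) (rx_obs_G B 1 G (r l))"
    using rl by (simp add: a_def box_input_def)
  define g where "g j = G 0 (r l) j" for j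
  have Gj: "j < B \<Longrightarrow> g j \<in> (if M (r l) j then carrier R - {\<zero>} else {\<zero>})" for j
    using G rl unfolding coef_set_def g_def by (auto simp: PiE_iff)
  have gc: "j < B \<Longrightarrow> g j \<in> carrier R" for j
    using Gj[of j] by (auto split: if_splits)
  have gz: "m < D \<Longrightarrow> l < m \<Longrightarrow> g (c m) = \<zero>" for m
    using Gj[of "c m"] upper l c_rng by (auto split: if_splits)
  have gl: "g (c l) \<in> carrier R" "g (c l) \<noteq> \<zero>"
    using Gj[OF cl] diag l by auto
  define X0 where "X0 j = (if j \<in> c ` {..<D} then x (inv_into {..<D} c j) else \<zero>)" for j
  have X0c: "X0 j \<in> carrier R" for j
    using x unfolding X0_def by (auto simp: PiE_iff intro!: inv_into_into)
  have X0l: "X0 (c l) = x l" using l c_inj unfolding X0_def by (simp add: inv_into_f_f)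
  have y: "rxy (a (Suc (r l))) 0 = finsum R (\<lambda>j. g j \<otimes> X0 j) {..<B}"
    unfolding a1 rxy_def rx_obs_Y_def
    using gc X0c unfolding g_def X0_def
    by (simp, intro finsum_cong') (auto simp: Xof_def intro!: m_closed)
  have gg: "j < B \<Longrightarrow> rxg (a (Suc (r l))) 0 j = g j" for j
    unfolding a1 rxg_def rx_obs_G_def g_def by simp
  define T where "T = {..<B} - {c l}"
  define z where "z = restrict x {..<l}"
  have S: "finsum R (\<lambda>j. rxg (a (Suc (r l))) 0 j \<otimes> Emb l z j) T = finsum R (\<lambda>j. g j \<otimes> X0 j) T"
  proof (rule finsum_cong')
    show "(\<lambda>j. g j \<otimes> X0 j) \<in> T \<rightarrow> carrier R" using gc X0c by (auto simp: T_def)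
  next
    fix j assume j: "j \<in> T"
    then have jB: "j < B" and jl: "j \<noteq> c l" by (auto simp: T_def)
    have injl: "inj_on c {..<l}" using c_inj l by (meson inj_on_subset lessThan_subset_iff less_imp_le_nat)
    show "rxg (a (Suc (r l))) 0 j \<otimes> Emb l z j = g j \<otimes> X0 j"
    proof (cases "j \<in> c ` {..<l}")
      case True
      then obtain m where m: "m < l" "j = c m" by auto
      have "Emb l z j = x m" using m injl unfolding Emb_def z_def by (simp add: inv_into_f_f)
      moreover have "X0 j = x m" using m l c_inj unfolding X0_def by (simp add: inv_into_f_f)
      ultimately show ?thesis using gg[OF jB] by simp
    next
      case False
      then have E: "Emb l z j = \<zero>" unfolding Emb_def by simp
      show ?thesis
      proof (cases "j \<in> c ` {..<D}")
        case True
        then obtain m where m: "m < D" "j = c m" by auto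
        then have "l < m" using False jl by (metis imageI lessThan_iff linorder_neqE_nat)
        then have "g j = \<zero>" using gz m by simp
        then show ?thesis using E gg[OF jB] X0c by simp
      next
        case False
        then have "X0 j = \<zero>" unfolding X0_def by simp
        then show ?thesis using E gg[OF jB] gc[OF jB] by simp
      qed
    qed
  qed simp
  have ins: "{..<B} = insert (c l) T" using cl by (auto simp: T_def)
  have y2: "rxy (a (Suc (r l))) 0 = g (c l) \<otimes> x l \<oplus> finsum R (\<lambda>j. g j \<otimes> X0 j) T"
    unfolding y ins X0l[symmetric]
  proof (rule finsum_insert)
    show "finite T" by (simp add: T_def)
    show "c l \<notin> T" by (simp add: T_def)
    show "(\<lambda>j. g j \<otimes> X0 j) \<in> T \<rightarrow> carrier R" using gc X0c by (auto simp: T_def)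
    show "g (c l) \<otimes> X0 (c l) \<in> carrier R" using gc[OF cl] X0c by simp
  qed
  define Sv where "Sv = finsum R (\<lambda>j. g j \<otimes> X0 j) T"
  have Svc: "Sv \<in> carrier R" unfolding Sv_def using gc X0c by (auto simp: T_def intro!: finsum_closed)
  have xl: "x l \<in> carrier R" using x l by auto
  have gU: "g (c l) \<in> Units R" using gl field_Units by auto
  have wl: "w (r l) < q" 
  proof -
    have "w (r l) < mm (r l)" using w rl by (auto simp: msg_set_def PiE_iff)
    moreover have "mm (r l) = q" using l by (auto simp: mm_def)
    ultimately show ?thesis by simp
  qed
  have ew: "e (w (r l)) \<in> carrier R" using e_bij wl unfolding q_def bij_betw_def by auto
  have diff: "g (c l) \<otimes> x l \<oplus> Sv \<ominus> Sv = g (c l) \<otimes> x l"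
    using gl xl Svc by (simp add: a_minus_def a_assoc r_neg)
  have inv: "inv (g (c l)) \<otimes> (g (c l) \<otimes> x l) = x l"
    using gU xl gl by (simp add: m_assoc[symmetric] Units_l_inv)
  have Hv: "Hh (a 0) (a (Suc (r l))) l z = e (w (r l)) \<ominus> x l"
  proof -
    have S2: "finsum R (\<lambda>j. rxg (a (Suc (r l))) 0 j \<otimes> Emb l z j) ({..<B} - {c l}) = Sv"
      using S by (simp add: T_def Sv_def)
    have v: "e (w (r l)) \<ominus> inv (g (c l)) \<otimes> (rxy (a (Suc (r l))) 0 \<ominus> Sv) = e (w (r l)) \<ominus> x l"
      using y2 diff inv by (simp add: Sv_def)
    have vc: "e (w (r l)) \<ominus> x l \<in> carrier R" using ew xl by simp
    show ?thesis
      unfolding Hh_def Let_def a0 S2 gg[OF cl] using vc v by (simp add: txw_def)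
  qed
  show ?thesis
    unfolding a_def[symmetric] wh_def z_def[symmetric] Hv
    using ew xl by (simp add: a_minus_def a_comm[of "e (w (r l))" "\<ominus> x l"] r_neg2)
qed

lemma q_pos: "0 < q" unfolding q_def using fin carrier_ne by (simp add: card_gt_0_iff)

lemma scheme: "ns_scheme R M K B 1 mm box"
  unfolding ns_scheme_def
proof (intro conjI allI impI ballI)
  show "\<And>k. k < K \<Longrightarrow> 0 < mm k" using q_pos by (simp add: mm_def)
  show "ns_box (Suc K) (party_inputs R K B 1 mm) box" by (rule box_ns)
next
  fix a ou assume "ou \<in> set_pmf (box a)"
  then obtain x where x: "x \<in> PiE {..<D} (\<lambda>_. carrier R)" and ou: "ou = outp a x"
    unfolding box_def using set_U by auto
  show "ou 0 \<in> TxOut ` chin_set R B 1" using Xof_closed[OF x] by (simp add: ou outp_def)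
  fix k show "ou (Suc k) \<in> range RxOut" by (simp add: ou outp_def)
qed simp

lemma err_zero: "k < K \<Longrightarrow> err_prob R M K B 1 mm box k = 0"
  unfolding err_prob_def
proof (intro sum.neutral ballI)
  fix w X G assume w: "w \<in> msg_set K mm" and X: "X \<in> chin_set R B 1" and G: "G \<in> coef_set R M K B 1"
    and k: "k < K"
  define a where "a = box_input R K B 1 w X G"
  have "measure_pmf.prob (box a) {ou. ou 0 = TxOut X \<and> ou (Suc k) \<noteq> RxOut (w k)} = 0"
    unfolding measure_pmf_zero_iff
  proof (rule ccontr)
    assume "set_pmf (box a) \<inter> {ou. ou 0 = TxOut X \<and> ou (Suc k) \<noteq> RxOut (w k)} \<noteq> {}"
    then obtain x where x: "x \<in> PiE {..<D} (\<lambda>_. carrier R)"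
      and o0: "outp a x 0 = TxOut X" and o1: "outp a x (Suc k) \<noteq> RxOut (w k)"
      unfolding box_def using set_U by auto
    have XX: "X = Xof x" using o0 by (simp add: outp_def)
    show False
    proof (cases "k \<in> r ` {..<D}")
      case True
      then obtain l where l: "l < D" "k = r l" by auto
      have il: "inv_into {..<D} r k = l" using l r_inj by (simp add: inv_into_f_f)
      have "wh (a 0) (a (Suc (r l))) l x = e (w (r l))"
        unfolding a_def XX using key[OF w G x l(1)] .
      moreover have "w (r l) < q"
      proof -
        have "w (r l) < mm (r l)" using w k l by (auto simp: msg_set_def PiE_iff)
        then show ?thesis using l by (auto simp: mm_def)
      qed
      ultimately have "outp a x (Suc k) = RxOut (w k)"
        using True il l e_bij unfolding outp_def q_def
        by (simp add: bij_betw_def inv_into_f_f)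
      then show False using o1 by simp
    next
      case False
      have "w k < mm k" using w k by (auto simp: msg_set_def PiE_iff)
      then have "w k = 0" using False by (simp add: mm_def)
      then show False using o1 False by (simp add: outp_def)
    qed
  qed
  then show "1 / (real (card (msg_set K mm)) * real (card (coef_set R M K B 1))) *
     measure_pmf.prob (box (box_input R K B 1 w X G)) {ou. ou 0 = TxOut X \<and> ou (Suc k) \<noteq> RxOut (w k)} = 0"
    by (simp add: a_def)
qed

lemma achievable: "ns_achievable R M K B (\<lambda>k. if k \<in> r ` {..<D} then log 2 (real q) else 0)"
  unfolding ns_achievable_def
proof (intro exI[of _ "\<lambda>_. 1"] exI[of _ "\<lambda>_. mm"] exI[of _ "\<lambda>_. box"] conjI allI impI)
  show "\<And>s. ns_scheme R M K B 1 mm box" by (rule scheme)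
  fix k assume k: "k < K"
  show "(\<lambda>s. err_prob R M K B 1 mm box k) \<longlonglongrightarrow> 0" using err_zero[OF k] by simp
  show "\<exists>L. (\<lambda>s. log 2 (real (mm k)) / real (1::nat)) \<longlonglongrightarrow> L \<and>
          L \<ge> (if k \<in> r ` {..<D} then log 2 (real q) else 0)"
    by (intro exI[of _ "log 2 (real (mm k))"]) (simp add: mm_def)
qed

end


lemma has_tri_le: "has_tri M K B D \<Longrightarrow> D \<le> K"
proof -
  assume "has_tri M K B D"
  then obtain r where r: "inj_on r {..<D}" "r ` {..<D} \<subseteq> {..<K}" unfolding has_tri_def by blast
  have "D = card (r ` {..<D})" using r(1) by (simp add: card_image)
  also have "\<dots> \<le> card {..<K}" using r(2) by (intro card_mono) auto
  finally show ?thesis by simp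
qed

lemma tri_has: "has_tri M K B (tri M K B)"
proof -
  have fin: "finite {D. has_tri M K B D}"
    by (rule finite_subset[of _ "{..K}"]) (auto dest: has_tri_le)
  have "has_tri M K B 0" unfolding has_tri_def by (intro exI[of _ id]) auto
  then have ne: "{D. has_tri M K B D} \<noteq> {}" by blast
  show ?thesis using Max_in[OF fin ne] unfolding tri_def by simp
qed

lemma main_ach:
  fixes F :: "nat ring" and D K B :: nat and r c :: "nat \<Rightarrow> nat"
  assumes F: "field F" "finite (carrier F)"
    and r: "inj_on r {..<D}" "r ` {..<D} \<subseteq> {..<K}"
    and c: "inj_on c {..<D}" "c ` {..<D} \<subseteq> {..<B}"
    and d: "\<forall>i<D. M (r i) (c i)" "\<forall>i<D. \<forall>j<D. i < j \<longrightarrow> \<not> M (r i) (c j)"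
  shows "ns_achievable F M K B (\<lambda>k. if k \<in> r ` {..<D} then log 2 (real (card (carrier F))) else 0)"
proof -
  obtain e where e: "bij_betw e {0..<card (carrier F)} (carrier F)"
    using ex_bij_betw_nat_finite[OF F(2)] by blast
  interpret T: tri_ctx F M K B D r c e
  proof (intro tri_ctx.intro tri_ctx_axioms.intro)
    show "field F" by (rule F(1))
    show "bij_betw e {..<card (carrier F)} (carrier F)" using e by (simp add: atLeast0LessThan)
  qed (use F r c d in auto)
  show ?thesis using T.achievable unfolding T.q_def .
qed

lemma sum_ind:
  fixes D K :: nat and r :: "nat \<Rightarrow> nat"
  assumes "inj_on r {..<D}" "r ` {..<D} \<subseteq> {..<K}"
  shows "(\<Sum>k<K. if k \<in> r ` {..<D} then v else 0) = real D * (v::real)"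
proof -
  have "(\<Sum>k<K. if k \<in> r ` {..<D} then v else 0) = (\<Sum>k\<in>{..<K} \<inter> r ` {..<D}. v)"
    using sum.inter_restrict[of "{..<K}" "\<lambda>_. v" "r ` {..<D}"] by simp
  also have "{..<K} \<inter> r ` {..<D} = r ` {..<D}" using assms(2) by blast
  also have "(\<Sum>k\<in>r ` {..<D}. v) = real D * v" using assms(1) by (simp add: card_image)
  finally show ?thesis .
qed

theorem theorem9:
  fixes M :: "nat \<Rightarrow> nat \<Rightarrow> bool" and K B :: nat
  shows "(\<forall>F :: nat ring. field F \<and> finite (carrier F) \<longrightarrow>
            C_sum_NS F M K B \<ge> ereal (real (tri M K B) * log 2 (real (card (carrier F))))) \<and>
         (\<forall>Fam :: nat \<Rightarrow> nat ring. (\<forall>q. primepow q \<longrightarrow>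
               field (Fam q) \<and> finite (carrier (Fam q)) \<and> card (carrier (Fam q)) = q) \<longrightarrow>
            d_sum_NS Fam M K B \<ge> ereal (real (tri M K B)))"
proof -
  define D where "D = tri M K B"
  obtain r c where r: "inj_on r {..<D}" "r ` {..<D} \<subseteq> {..<K}"
    and c: "inj_on c {..<D}" "c ` {..<D} \<subseteq> {..<B}"
    and d: "\<forall>i<D. M (r i) (c i)" "\<forall>i<D. \<forall>j<D. i < j \<longrightarrow> \<not> M (r i) (c j)"
    using tri_has[of M K B] unfolding has_tri_def D_def[symmetric] by blast
  show ?thesis unfolding D_def[symmetric]
  proof (intro conjI allI impI)
    fix F :: "nat ring" assume F: "field F \<and> finite (carrier F)"
    define Rv where "Rv = (\<lambda>k. if k \<in> r ` {..<D} then log 2 (real (card (carrier F))) else 0)"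
    have "ns_achievable F M K B Rv"
      unfolding Rv_def by (rule main_ach) (use F r c d in auto)
    then have "Rv \<in> closure {R. ns_achievable F M K B R}"
      using closure_subset[of "{R. ns_achievable F M K B R}"] by blast
    then have "ereal (\<Sum>k<K. Rv k) \<le> C_sum_NS F M K B"
      unfolding C_sum_NS_def by (rule SUP_upper)
    moreover have "(\<Sum>k<K. Rv k) = real D * log 2 (real (card (carrier F)))"
      unfolding Rv_def using sum_ind[OF r] .
    ultimately show "ereal (real D * log 2 (real (card (carrier F)))) \<le> C_sum_NS F M K B" by simp
  next
    fix Fam :: "nat \<Rightarrow> nat ring"
    assume H: "\<forall>q. primepow q \<longrightarrow> field (Fam q) \<and> finite (carrier (Fam q)) \<and> card (carrier (Fam q)) = q"
    define dv where "dv = (\<lambda>k. if k \<in> r ` {..<D} then 1 else (0::real))"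
    define Rf where "Rf = (\<lambda>q k. if k \<in> r ` {..<D} then log 2 (real q) else (0::real))"
    have "dof_achievable Fam M K B dv"
      unfolding dof_achievable_def
    proof (intro exI[of _ Rf] conjI allI impI)
      fix q :: nat assume q: "primepow q"
      have cq: "card (carrier (Fam q)) = q" "field (Fam q)" "finite (carrier (Fam q))" using H q by auto
      have "ns_achievable (Fam q) M K B
          (\<lambda>k. if k \<in> r ` {..<D} then log 2 (real (card (carrier (Fam q)))) else 0)"
        by (rule main_ach) (use cq r c d in auto)
      then show "ns_achievable (Fam q) M K B (Rf q)" unfolding Rf_def cq(1) .
    next
      fix k assume k: "k < K"
      have ev: "\<forall>\<^sub>F q in inf at_top (principal {q. primepow q}). Rf q k / log 2 (real q) = dv k"
        unfolding eventually_inf_principal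
      proof (rule always_eventually, intro allI impI)
        fix q :: nat assume "q \<in> {q. primepow q}"
        then have "q > 1" using primepow_gt_Suc_0 by auto
        then have "log 2 (real q) > 0" by simp
        then show "Rf q k / log 2 (real q) = dv k" unfolding Rf_def dv_def by simp
      qed
      show "\<exists>L. ((\<lambda>q. Rf q k / log 2 (real q)) \<longlongrightarrow> L) (inf at_top (principal {q. primepow q})) \<and> dv k \<le> L"
        using tendsto_eventually[OF ev] by blast
    qed
    then have "dv \<in> closure {d. dof_achievable Fam M K B d}"
      using closure_subset[of "{d. dof_achievable Fam M K B d}"] by blast
    then have "ereal (\<Sum>k<K. dv k) \<le> d_sum_NS Fam M K B"
      unfolding d_sum_NS_def by (rule SUP_upper)
    moreover have "(\<Sum>k<K. dv k) = real D" unfolding dv_def using sum_ind[OF r, of 1] by simp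
    ultimately show "ereal (real D) \<le> d_sum_NS Fam M K B" by simp
  qed
qed

end
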